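(* If $G$ is a bipartite $\epsilon$-expander with $2n$ vertices, then every separator in $G$ has size at least $\frac{\epsilon}{2}(n-1)-1$.
   Context: For $\epsilon\in(0,1]$, a bipartite graph $G$ with bipartition $A,B$ is a bipartite $\epsilon$-expander if $|A|=|B|$ and $|N(S)|\geq(1+\epsilon)|S|$ for every $S\subset A$ with $|S|\leq|A|/2$, where $N(S)$ is the set of vertices adjacent to some vertex of $S$. A separator in a graph $G$ is a set $Z\subseteq V(G)$ such that each component of $G-Z$ has at most $|V(G)|/2$ vertices. *)

theory Defs
  imports Complex_Main
begin

definition simple_graph :: "'a set \<Rightarrow> ('a \<Rightarrow> 'a \<Rightarrow> bool) \<Rightarrow> bool" where
  "simple_graph V E \<longleftrightarrow> finite V \<and> (\<forall>x y. E x y \<longrightarrow> x \<in> V \<and> y \<in> V)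
     \<and> (\<forall>x y. E x y \<longrightarrow> E y x) \<and> (\<forall>x. \<not> E x x)"

definition bipartite_graph :: "'a set \<Rightarrow> ('a \<Rightarrow> 'a \<Rightarrow> bool) \<Rightarrow> 'a set \<Rightarrow> 'a set \<Rightarrow> bool" where
  "bipartite_graph V E A B \<longleftrightarrow> simple_graph V E \<and> A \<union> B = V \<and> A \<inter> B = {}
     \<and> (\<forall>x y. E x y \<longrightarrow> (x \<in> A \<and> y \<in> B) \<or> (x \<in> B \<and> y \<in> A))"

definition nbhd :: "('a \<Rightarrow> 'a \<Rightarrow> bool) \<Rightarrow> 'a set \<Rightarrow> 'a set" where
  "nbhd E S = {v. \<exists>u\<in>S. E u v}"

definition bipartite_expander ::
  "'a set \<Rightarrow> ('a \<Rightarrow> 'a \<Rightarrow> bool) \<Rightarrow> 'a set \<Rightarrow> 'a set \<Rightarrow> real \<Rightarrow> bool" where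
  "bipartite_expander V E A B \<epsilon> \<longleftrightarrow> bipartite_graph V E A B \<and> card A = card B
     \<and> (\<forall>S. S \<subseteq> A \<and> real (card S) \<le> real (card A) / 2
            \<longrightarrow> real (card (nbhd E S)) \<ge> (1 + \<epsilon>) * real (card S))"

definition component_in :: "('a \<Rightarrow> 'a \<Rightarrow> bool) \<Rightarrow> 'a set \<Rightarrow> 'a \<Rightarrow> 'a set" where
  "component_in E W v = {u \<in> W. (\<lambda>x y. x \<in> W \<and> y \<in> W \<and> E x y)\<^sup>*\<^sup>* v u}"

definition separator :: "'a set \<Rightarrow> ('a \<Rightarrow> 'a \<Rightarrow> bool) \<Rightarrow> 'a set \<Rightarrow> bool" where
  "separator V E Z \<longleftrightarrow> Z \<subseteq> V \<and>
     (\<forall>v \<in> V - Z. real (card (component_in E (V - Z) v)) \<le> real (card V) / 2)"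

end

theory Submission
  imports Defs
begin

definition clos :: "('a \<Rightarrow> 'a \<Rightarrow> bool) \<Rightarrow> 'a set \<Rightarrow> 'a set \<Rightarrow> bool" where
  "clos E W X \<longleftrightarrow> X \<subseteq> W \<and> (\<forall>x\<in>X. \<forall>y\<in>W. E x y \<longrightarrow> y \<in> X)"

lemma comp_closed:
  assumes "v \<in> W"
  shows "clos E W (component_in E W v)"
  unfolding clos_def component_in_def
proof (intro conjI ballI impI)
  fix x y assume x: "x \<in> {u \<in> W. (\<lambda>x y. x \<in> W \<and> y \<in> W \<and> E x y)\<^sup>*\<^sup>* v u}"
    and y: "y \<in> W" and e: "E x y"
  then have "(\<lambda>x y. x \<in> W \<and> y \<in> W \<and> E x y)\<^sup>*\<^sup>* v y"
    by (auto intro: rtranclp.rtrancl_into_rtrancl)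
  then show "y \<in> {u \<in> W. (\<lambda>x y. x \<in> W \<and> y \<in> W \<and> E x y)\<^sup>*\<^sup>* v u}" using y by auto
qed auto

lemma comp_self: "v \<in> W \<Longrightarrow> v \<in> component_in E W v"
  unfolding component_in_def by auto

lemma comp_sub:
  assumes "clos E W Y" "v \<in> Y"
  shows "component_in E W v \<subseteq> Y"
proof
  fix u assume "u \<in> component_in E W v"
  then have "(\<lambda>x y. x \<in> W \<and> y \<in> W \<and> E x y)\<^sup>*\<^sup>* v u" unfolding component_in_def by auto
  then show "u \<in> Y"
  proof (induction rule: rtranclp_induct)
    case base then show ?case using assms by auto
  next
    case (step y z) then show ?case using assms(1) unfolding clos_def by auto
  qed
qed

lemma clos_diff:
  assumes "\<forall>x y. E x y \<longrightarrow> E y x" "clos E W Y" "clos E W C" "C \<subseteq> Y"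
  shows "clos E W (Y - C)"
  using assms unfolding clos_def by blast

lemma clos_compl:
  assumes "\<forall>x y. E x y \<longrightarrow> E y x" "clos E W X"
  shows "clos E W (W - X)"
  using assms unfolding clos_def by blast

lemma clos_un:
  assumes "clos E W X" "clos E W C"
  shows "clos E W (X \<union> C)"
  using assms unfolding clos_def by blast

lemma clos_empty: "clos E W {}" unfolding clos_def by auto

lemma nbhd_sub:
  assumes "bipartite_graph V E A B" "clos E (V - Z) X"
  shows "nbhd E (X \<inter> A) \<subseteq> (X \<inter> B) \<union> (Z \<inter> B)"
proof
  fix v assume "v \<in> nbhd E (X \<inter> A)"
  then obtain u where u: "u \<in> X" "u \<in> A" "E u v" unfolding nbhd_def by auto
  have "v \<in> B" "v \<in> V" using assms(1) u unfolding bipartite_graph_def simple_graph_def by blast+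
  moreover have "v \<notin> Z \<Longrightarrow> v \<in> X" using assms(2) u \<open>v \<in> V\<close> unfolding clos_def by blast
  ultimately show "v \<in> (X \<inter> B) \<union> (Z \<inter> B)" by blast
qed

lemma bound:
  assumes "bipartite_expander V E A B \<epsilon>" "clos E (V - Z) X"
    "real (card (X \<inter> A)) \<le> real (card A) / 2"
  shows "(1 + \<epsilon>) * real (card (X \<inter> A)) \<le> real (card (X \<inter> B)) + real (card (Z \<inter> B))"
proof -
  have bg: "bipartite_graph V E A B" using assms(1) unfolding bipartite_expander_def by auto
  have fin: "finite V" using bg unfolding bipartite_graph_def simple_graph_def by auto
  have fB: "finite B" using bg fin unfolding bipartite_graph_def by auto
  have "(1 + \<epsilon>) * real (card (X \<inter> A)) \<le> real (card (nbhd E (X \<inter> A)))"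
    using assms(1,3) unfolding bipartite_expander_def by auto
  also have "card (nbhd E (X \<inter> A)) \<le> card ((X \<inter> B) \<union> (Z \<inter> B))"
    by (rule card_mono) (use fB nbhd_sub[OF bg assms(2)] in auto)
  also have "\<dots> \<le> card (X \<inter> B) + card (Z \<inter> B)" by (rule card_Un_le)
  finally show ?thesis by simp
qed

theorem lemma14:
  fixes V :: "'a set" and E :: "'a \<Rightarrow> 'a \<Rightarrow> bool" and A B Z :: "'a set"
    and \<epsilon> :: real and n :: nat
  assumes "0 < \<epsilon>" and "\<epsilon> \<le> 1"
    and "bipartite_expander V E A B \<epsilon>"
    and "card V = 2 * n"
    and "separator V E Z"
  shows "real (card Z) \<ge> \<epsilon> / 2 * (real n - 1) - 1"
proof -
  note ex = assms(3)
  have bg: "bipartite_graph V E A B" using ex unfolding bipartite_expander_def by auto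
  have fin: "finite V" and sym: "\<forall>x y. E x y \<longrightarrow> E y x"
    using bg unfolding bipartite_graph_def simple_graph_def by auto
  have AB: "A \<union> B = V" "A \<inter> B = {}" using bg unfolding bipartite_graph_def by auto
  have fA: "finite A" and fB: "finite B" using AB fin by auto
  have cAB: "card A = card B" using ex unfolding bipartite_expander_def by auto
  have "card V = card A + card B" using AB fA fB card_Un_disjoint by metis
  then have cA: "card A = n" and cB: "card B = n" using assms(4) cAB by auto
  have ZV: "Z \<subseteq> V" using assms(5) unfolding separator_def by auto
  define W where "W = V - Z"
  define zA where "zA = card (Z \<inter> A)"
  define zB where "zB = card (Z \<inter> B)"
  have cZ: "card Z = zA + zB"
  proof -
    have "Z = (Z \<inter> A) \<union> (Z \<inter> B)" using ZV AB by auto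
    then have "card Z = card ((Z \<inter> A) \<union> (Z \<inter> B))" by simp
    also have "\<dots> = zA + zB" unfolding zA_def zB_def
      by (rule card_Un_disjoint) (use fA fB AB in auto)
    finally show ?thesis .
  qed
  have fW: "finite W" using fin W_def by auto
  have compsize: "real (card (component_in E W v)) \<le> real n" if "v \<in> W" for v
    using assms(5) that assms(4) unfolding separator_def W_def by auto
  have cWA: "card (W \<inter> A) = n - zA"
  proof -
    have "A = (W \<inter> A) \<union> (Z \<inter> A)" using W_def AB ZV by auto
    then have "card A = card (W \<inter> A) + card (Z \<inter> A)"
      by (metis Diff_disjoint W_def card_Un_disjoint fA finite_Int inf_commute inf_left_commute
          Int_Diff inf_bot_right)
    then show ?thesis using cA zA_def by simp
  qed
  have cWB: "card (W \<inter> B) = n - zB"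
  proof -
    have "B = (W \<inter> B) \<union> (Z \<inter> B)" using W_def AB ZV by auto
    then have "card B = card (W \<inter> B) + card (Z \<inter> B)"
      by (metis Diff_disjoint W_def card_Un_disjoint fB finite_Int inf_commute inf_left_commute
          Int_Diff inf_bot_right)
    then show ?thesis using cB zB_def by simp
  qed
  have zAn: "zA \<le> n" "zB \<le> n" unfolding zA_def zB_def using cA cB fA fB
    by (metis card_mono inf_le2)+
  have bnd: "(1 + \<epsilon>) * real (card (X \<inter> A)) \<le> real (card (X \<inter> B)) + real zB"
    if "clos E W X" "real (card (X \<inter> A)) \<le> real n / 2" for X
    using bound[OF ex, of Z X] that cA unfolding W_def zB_def by auto
  show ?thesis
  proof (cases "\<exists>v\<in>W. real (card (component_in E W v \<inter> A)) > real n / 2")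
    case True
    then obtain v where v: "v \<in> W" and big: "real (card (component_in E W v \<inter> A)) > real n / 2"
      by auto
    define C where "C = component_in E W v"
    have fC: "finite C" using fW C_def unfolding component_in_def by auto
    define s where "s = n div 2"
    have "real n < real (2 * card (C \<inter> A))" using big unfolding C_def by simp
    then have n2: "n < 2 * card (C \<inter> A)" by linarith
    have "s \<le> card (C \<inter> A)" using n2 unfolding s_def by linarith
    then obtain S where S: "S \<subseteq> C \<inter> A" "card S = s"
      by (meson obtain_subset_with_card_n)
    have sn: "real s \<le> real n / 2" unfolding s_def by linarith
    have sn2: "real n - 1 \<le> 2 * real s" unfolding s_def by linarith
    have "s + 1 \<le> card (C \<inter> A)" using n2 unfolding s_def by linarith
    then have aC: "real (card (C \<inter> A)) \<ge> real s + 1" by linarith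
    have e1: "(1 + \<epsilon>) * real (card S) \<le> real (card (nbhd E S))"
      using ex S cA sn unfolding bipartite_expander_def by auto
    have CcV: "clos E (V - Z) C" using comp_closed[OF v] C_def W_def by simp
    have NS: "nbhd E (C \<inter> A) \<subseteq> (C \<inter> B) \<union> (Z \<inter> B)" by (rule nbhd_sub[OF bg CcV])
    have "nbhd E S \<subseteq> nbhd E (C \<inter> A)" using S unfolding nbhd_def by auto
    also have "\<dots> \<subseteq> (C \<inter> B) \<union> (Z \<inter> B)" by (rule NS)
    finally have "card (nbhd E S) \<le> card ((C \<inter> B) \<union> (Z \<inter> B))"
      by (rule card_mono[rotated]) (use fB in auto)
    also have "\<dots> \<le> card (C \<inter> B) + zB" unfolding zB_def by (rule card_Un_le)
    finally have "card (nbhd E S) \<le> card (C \<inter> B) + zB" .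
    then have "real (card (nbhd E S)) \<le> real (card (C \<inter> B)) + real zB"
      by (metis of_nat_add of_nat_mono)
    then have i1: "(1 + \<epsilon>) * real s \<le> real (card (C \<inter> B)) + real zB"
      using S(2) e1 by simp
    have "C = (C \<inter> A) \<union> (C \<inter> B)" using C_def W_def AB unfolding component_in_def by auto
    then have "card C = card (C \<inter> A) + card (C \<inter> B)"
      by (metis AB(2) card_Un_disjoint fC finite_Int inf_assoc inf_bot_right inf_commute
          inf_left_commute)
    moreover have "real (card C) \<le> real n" using compsize v C_def by auto
    ultimately have "real (card (C \<inter> B)) \<le> real n - real s - 1" using aC by linarith
    with i1 have "(1 + \<epsilon>) * real s \<le> real n - real s - 1 + real zB" by linarith
    moreover have "\<epsilon> * (real n - 1) \<le> \<epsilon> * (2 * real s)"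
      using sn2 assms(1) by (intro mult_left_mono) auto
    ultimately have "real zB \<ge> \<epsilon> / 2 * (real n - 1) - 1"
      using sn2 by (simp add: algebra_simps)
    then show ?thesis using cZ by simp
  next
    case False
    then have small: "real (card (component_in E W v \<inter> A)) \<le> real n / 2" if "v \<in> W" for v
      using that by auto
    define F where "F = {X. clos E W X \<and> real (card (X \<inter> A)) \<le> real n / 2}"
    have "F \<subseteq> Pow W" unfolding F_def clos_def by auto
    then have fF: "finite F" using fW by (meson finite_Pow_iff rev_finite_subset)
    have "{} \<in> F" unfolding F_def using clos_empty by auto
    define m where "m = Max ((\<lambda>X. card (X \<inter> A)) ` F)"
    have "m \<in> (\<lambda>X. card (X \<inter> A)) ` F" unfolding m_def
      using fF \<open>{} \<in> F\<close> by (intro Max_in) auto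
    then obtain X where X: "X \<in> F" "card (X \<inter> A) = m" by auto
    have maxX: "card (X' \<inter> A) \<le> card (X \<inter> A)" if "X' \<in> F" for X'
      using X(2) that fF unfolding m_def by (simp add: Max_ge)
    have Xc: "clos E W X" and Xs: "real (card (X \<inter> A)) \<le> real n / 2" using X(1) F_def by auto
    define Y where "Y = W - X"
    have Yc: "clos E W Y" using clos_compl[OF sym Xc] Y_def by simp
    have XW: "X \<subseteq> W" using Xc unfolding clos_def by auto
    have fX: "finite X" using XW fW finite_subset by auto
    have fY: "finite Y" using Y_def fW by auto
    have key: "(1 + \<epsilon>) * (real n - real zA) \<le> real n + 2 * real zB"
      if P: "clos E W P" "clos E W Q" "clos E W R"
        "real (card (P \<inter> A)) \<le> real n / 2" "real (card (Q \<inter> A)) \<le> real n / 2"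
        "real (card (R \<inter> A)) \<le> real n / 2"
        "P \<inter> Q = {}" "P \<inter> R = {}" "Q \<inter> R = {}" "P \<union> Q \<union> R = W" for P Q R
    proof -
      have fP: "finite P" "finite Q" "finite R" using P fW unfolding clos_def
        by (auto intro: finite_subset)
      have "card (W \<inter> A) = card (P \<inter> A) + card (Q \<inter> A) + card (R \<inter> A)"
      proof -
        have "W \<inter> A = (P \<inter> A) \<union> (Q \<inter> A) \<union> (R \<inter> A)" using P(10) by auto
        moreover have "card ((P \<inter> A) \<union> (Q \<inter> A) \<union> (R \<inter> A)) =
            card ((P \<inter> A) \<union> (Q \<inter> A)) + card (R \<inter> A)"
          by (rule card_Un_disjoint) (use fP P in auto)
        moreover have "card ((P \<inter> A) \<union> (Q \<inter> A)) = card (P \<inter> A) + card (Q \<inter> A)"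
          by (rule card_Un_disjoint) (use fP P in auto)
        ultimately show ?thesis by simp
      qed
      moreover have "card (W \<inter> B) = card (P \<inter> B) + card (Q \<inter> B) + card (R \<inter> B)"
      proof -
        have "W \<inter> B = (P \<inter> B) \<union> (Q \<inter> B) \<union> (R \<inter> B)" using P(10) by auto
        moreover have "card ((P \<inter> B) \<union> (Q \<inter> B) \<union> (R \<inter> B)) =
            card ((P \<inter> B) \<union> (Q \<inter> B)) + card (R \<inter> B)"
          by (rule card_Un_disjoint) (use fP P in auto)
        moreover have "card ((P \<inter> B) \<union> (Q \<inter> B)) = card (P \<inter> B) + card (Q \<inter> B)"
          by (rule card_Un_disjoint) (use fP P in auto)
        ultimately show ?thesis by simp
      qed
      ultimately have ra: "real n - real zA = real (card (P \<inter> A)) + real (card (Q \<inter> A)) + real (card (R \<inter> A))"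
        and rb: "real n - real zB = real (card (P \<inter> B)) + real (card (Q \<inter> B)) + real (card (R \<inter> B))"
        using cWA cWB zAn by (simp_all add: of_nat_diff)
      have "(1 + \<epsilon>) * (real n - real zA) = (1 + \<epsilon>) * real (card (P \<inter> A)) + (1 + \<epsilon>) * real (card (Q \<inter> A)) + (1 + \<epsilon>) * real (card (R \<inter> A))"
        unfolding ra by (simp add: algebra_simps)
      then show ?thesis using bnd[OF P(1) P(4)] bnd[OF P(2) P(5)] bnd[OF P(3) P(6)] rb
        by linarith
    qed
    have fin_ineq: "real (card Z) \<ge> \<epsilon> / 2 * (real n - 1) - 1"
      if "(1 + \<epsilon>) * (real n - real zA) \<le> real n + 2 * real zB"
    proof -
      have "\<epsilon> * real zA \<le> real zA" using assms(2) mult_right_mono[of \<epsilon> 1 "real zA"] by simp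
      then have "\<epsilon> * real n \<le> 2 * real (card Z)" using that cZ by (simp add: algebra_simps)
      then show ?thesis using assms(1) by (simp add: algebra_simps)
    qed
    show ?thesis
    proof (cases "real (card (Y \<inter> A)) \<le> real n / 2")
      case True
      show ?thesis
        by (rule fin_ineq, rule key[OF Xc Yc clos_empty Xs True])
           (use Y_def XW in auto)
    next
      case False
      have cY: "card (Y \<inter> A) = card (W \<inter> A) - card (X \<inter> A)"
      proof -
        have "W \<inter> A = (X \<inter> A) \<union> (Y \<inter> A)" using Y_def XW by auto
        then have "card (W \<inter> A) = card (X \<inter> A) + card (Y \<inter> A)"
          by (metis Y_def Diff_disjoint card_Un_disjoint fX fY finite_Int inf_commute
              inf_left_commute inf_bot_right)
        then show ?thesis by simp
      qed
      then have "card (Y \<inter> A) \<noteq> 0" using False by auto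
      then obtain v where v: "v \<in> Y" "v \<in> A" by (metis card.empty disjoint_iff)
      have vW: "v \<in> W" using v Y_def by auto
      define C where "C = component_in E W v"
      have Cc: "clos E W C" using comp_closed[OF vW] C_def by simp
      have CY: "C \<subseteq> Y" using comp_sub[OF Yc v(1)] C_def by simp
      have fC: "finite C" using CY fY finite_subset by auto
      have vC: "v \<in> C" using comp_self[OF vW] C_def by simp
      have Cs: "real (card (C \<inter> A)) \<le> real n / 2" using small[OF vW] C_def by simp
      have XC: "X \<inter> C = {}" using CY Y_def by auto
      have cXC: "card ((X \<union> C) \<inter> A) = card (X \<inter> A) + card (C \<inter> A)"
        by (metis Int_Un_distrib2 XC card_Un_disjoint fC fX finite_Int inf_assoc inf_bot_left
            inf_commute inf_left_commute)
      have "card (C \<inter> A) > 0" using vC v fC card_gt_0_iff by blast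
      then have "X \<union> C \<notin> F" using maxX cXC by fastforce
      then have big: "real (card (X \<inter> A)) + real (card (C \<inter> A)) > real n / 2"
        using clos_un[OF Xc Cc] cXC unfolding F_def by auto
      have YCc: "clos E W (Y - C)" using clos_diff[OF sym Yc Cc CY] .
      have "card ((Y - C) \<inter> A) = card (Y \<inter> A) - card (C \<inter> A)"
      proof -
        have "(Y - C) \<inter> A = (Y \<inter> A) - (C \<inter> A)" by auto
        moreover have "C \<inter> A \<subseteq> Y \<inter> A" using CY by auto
        ultimately show ?thesis using fC by (simp add: card_Diff_subset)
      qed
      then have "real (card ((Y - C) \<inter> A)) \<le> real n / 2"
        using cY cWA big by linarith
      then show ?thesis
        by (intro fin_ineq key[OF Xc Cc YCc Xs Cs]) (use Y_def XW CY in auto)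
    qed
  qed
qed

end
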